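(* Let $N_0,B,T_c,G_c,p_r,p_d,p_s,C_0>0$ and $\alpha>1$, with $T=BT_c$ an integer greater than $1$, and let $R>0$. Set $\rho_r=\frac{G_cp_r}{N_0B}$, $\rho_d=\frac{G_cp_d}{N_0B}$, $\rho_s=\frac{G_cp_s}{N_0B}$, $\rho_0=\frac{G_cC_0}{N_0}$, $\Theta=(\alpha,\rho_r,\rho_d,\rho_s,\rho_0,T)$. Suppose $$\rho_r+2\rho_0\ \ge\ \frac{\alpha}{1+\lfloor\sqrt T\rfloor}+\frac{\alpha(1+\lfloor\sqrt T\rfloor)}{\lfloor\sqrt T\rfloor}\Big(2^{\frac{R}{1-\lfloor\sqrt T\rfloor/T}}-1\Big).$$ Let $\eta^\star_{zf}(R,\Theta)=\frac{G_c}{N_0}\zeta^\star_{zf}(R,\Theta)$ and $$e(R,\Theta)=\frac{RB}{2p_r+p_d+p_s+4C_0B+\frac{32}{3}\frac{C_0}{T_c}}.$$ Then $\frac23 e(R,\Theta)<\eta^\star_{zf}(R,\Theta)<e(R,\Theta)$.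
   Context: For $M>K$, $1\le K\le\tau<T$ let $$\gamma_u=\frac{K+\tau}{2\tau(M-K)}\Big(2^{\frac{R}{K(1-\tau/T)}}-1\Big)+\sqrt{\Big(\frac{K+\tau}{2\tau(M-K)}\Big(2^{\frac{R}{K(1-\tau/T)}}-1\Big)\Big)^2+\frac{2^{\frac{R}{K(1-\tau/T)}}-1}{\tau(M-K)}}$$ and define $\zeta_{zf}(M,K,\tau,R,\Theta)>0$ by $$\frac{R}{\zeta_{zf}(M,K,\tau,R,\Theta)}=\alpha K\gamma_u+\rho_s+K\Big(\rho_d+\frac{8K^2\rho_0}{3T}\Big)+M\Big(\rho_r+2K\rho_0+\frac{4K^2\rho_0}{T}\Big).$$ $\zeta^\star_{zf}(R,\Theta)$ is the maximum of $\zeta_{zf}$ over integers $(M,K,\tau)$ with $1\le K\le\tau<T$, $M>K$. *)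

theory Defs
  imports Complex_Main
begin

definition gamma_u :: "nat \<Rightarrow> nat \<Rightarrow> nat \<Rightarrow> real \<Rightarrow> nat \<Rightarrow> real" where
  "gamma_u M K tau R T =
    (let c = 2 powr (R / (real K * (1 - real tau / real T))) - 1;
         a = (real K + real tau) / (2 * real tau * (real M - real K)) * c
     in a + sqrt (a\<^sup>2 + c / (real tau * (real M - real K))))"

definition zeta_zf :: "nat \<Rightarrow> nat \<Rightarrow> nat \<Rightarrow> real \<Rightarrow>
    real \<Rightarrow> real \<Rightarrow> real \<Rightarrow> real \<Rightarrow> real \<Rightarrow> nat \<Rightarrow> real" where
  "zeta_zf M K tau R alpha rho_r rho_d rho_s rho_0 T =
     R / (alpha * real K * gamma_u M K tau R T + rho_s
          + real K * (rho_d + 8 * (real K)\<^sup>2 * rho_0 / (3 * real T))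
          + real M * (rho_r + 2 * real K * rho_0 + 4 * (real K)\<^sup>2 * rho_0 / real T))"

text \<open>zeta*_zf: the maximum (taken as supremum) of zeta_zf over integer triples
  (M,K,tau) with 1 <= K <= tau < T and M > K.\<close>
definition zeta_star_zf :: "real \<Rightarrow> real \<Rightarrow> real \<Rightarrow> real \<Rightarrow> real \<Rightarrow> real \<Rightarrow> nat \<Rightarrow> real" where
  "zeta_star_zf R alpha rho_r rho_d rho_s rho_0 T =
     Sup {zeta_zf M K tau R alpha rho_r rho_d rho_s rho_0 T | M K tau :: nat.
          1 \<le> K \<and> K \<le> tau \<and> tau < T \<and> K < M}"

end

theory Submission
  imports Defs
begin

lemma c_ge:
  assumes "1 \<le> K" "K \<le> tau" "tau < T" "R > 0"
  shows "2 powr (R / (real K * (1 - real tau / real T))) - 1 > 0"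
proof -
  have "1 - real tau / real T > 0" using assms by (simp add: field_simps)
  hence "R / (real K * (1 - real tau / real T)) > 0" using assms by simp
  hence "2 powr (R / (real K * (1 - real tau / real T))) > 1"
    by (simp add: powr_gt_zero)
  thus ?thesis by simp
qed

lemma gamma_nonneg:
  assumes "K < M" "1 \<le> K" "K \<le> tau" "tau < T" "R > 0"
  shows "gamma_u M K tau R T \<ge> 0"
proof -
  define c where "c = 2 powr (R / (real K * (1 - real tau / real T))) - 1"
  define a where "a = (real K + real tau) / (2 * real tau * (real M - real K)) * c"
  have c: "c > 0" using c_ge[OF assms(2-5)] c_def by simp
  have "real M - real K > 0" and tp: "real tau > 0" using assms by auto
  hence a: "a \<ge> 0" using c unfolding a_def by simp
  have "c / (real tau * (real M - real K)) \<ge> 0" using c \<open>real M - real K > 0\<close> tp by simp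
  hence "sqrt (a\<^sup>2 + c / (real tau * (real M - real K))) \<ge> 0" by simp
  moreover have "gamma_u M K tau R T = a + sqrt (a\<^sup>2 + c / (real tau * (real M - real K)))"
    unfolding gamma_u_def Let_def c_def a_def by simp
  ultimately show ?thesis using a by linarith
qed

lemma gamma_M2:
  assumes "1 \<le> tau" "tau < T" "R > 0"
  shows "gamma_u 2 1 tau R T \<ge> sqrt ((2 powr R - 1) / real T)"
proof -
  define c where "c = 2 powr (R / (real 1 * (1 - real tau / real T))) - 1"
  define a where "a = (real 1 + real tau) / (2 * real tau * (real 2 - real 1)) * c"
  have c: "c > 0" using c_ge[of 1 tau T R] assms c_def by simp
  have tp: "real tau > 0" using assms by auto
  hence a: "a \<ge> 0" using c unfolding a_def by simp
  have q: "0 < 1 - real tau / real T" "1 - real tau / real T \<le> 1" using assms by (simp_all add: field_simps)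
  have "R \<le> R / (1 - real tau / real T)"
    using q assms(3) by (simp add: field_simps)
  hence "2 powr R \<le> 2 powr (R / (1 - real tau / real T))" by simp
  hence c2: "2 powr R - 1 \<le> c" unfolding c_def by simp
  have c3: "(2 powr R - 1) / real T \<le> c / real tau"
  proof -
    have "(2 powr R - 1) / real T \<le> c / real T" using c2 assms by (simp add: divide_right_mono)
    also have "\<dots> \<le> c / real tau" using c tp assms by (simp add: frac_le)
    finally show ?thesis .
  qed
  have "sqrt ((2 powr R - 1) / real T) \<le> sqrt (a\<^sup>2 + c / (real tau * (real 2 - real 1)))"
    using c3 by (intro real_sqrt_le_mono) (simp add: add_increasing)
  moreover have "gamma_u 2 1 tau R T = a + sqrt (a\<^sup>2 + c / (real tau * (real 2 - real 1)))"
    unfolding gamma_u_def Let_def c_def a_def by simp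
  ultimately show ?thesis using a by linarith
qed

lemma den_lower:
  fixes alpha rr rd rs r0 R :: real and T M K tau :: nat
  assumes pos: "rr > 0" "rd > 0" "rs > 0" "r0 > 0" "alpha > 1" "R > 0"
    and f: "1 \<le> K" "K \<le> tau" "tau < T" "K < M"
  shows "alpha * real K * gamma_u M K tau R T + rs
          + real K * (rd + 8 * (real K)\<^sup>2 * r0 / (3 * real T))
          + real M * (rr + 2 * real K * r0 + 4 * (real K)\<^sup>2 * r0 / real T)
         \<ge> (2*rr + rd + rs + 4*r0 + 32*r0/(3*real T))
            + min rr (alpha * sqrt ((2 powr R - 1) / real T))"
proof (cases "M = 2")
  case True
  hence K: "K = 1" using f by auto
  have g: "gamma_u 2 1 tau R T \<ge> sqrt ((2 powr R - 1) / real T)"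
    using gamma_M2[of tau T R] f pos K by simp
  have "alpha * gamma_u 2 1 tau R T \<ge> alpha * sqrt ((2 powr R - 1) / real T)"
    using g pos by simp
  thus ?thesis using True K by (simp add: field_simps)
next
  case False
  hence M3: "real M \<ge> 3" using f by auto
  have Kr: "real K \<ge> 1" using f by simp
  have T0: "real T > 0" using f by simp
  have g: "gamma_u M K tau R T \<ge> 0" using gamma_nonneg f pos by simp
  have h6: "alpha * real K * gamma_u M K tau R T \<ge> 0" using g pos Kr by simp
  have K2: "(real K)\<^sup>2 \<ge> 1" using Kr by (simp add: one_le_power)
  have K3: "real K * (real K)\<^sup>2 \<ge> 1" 
  proof -
    have "real K * (real K)\<^sup>2 \<ge> 1 * 1" using Kr K2 by (intro mult_mono) auto
    thus ?thesis by simp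
  qed
  have h1: "real K * rd \<ge> rd" using Kr pos by simp
  have h2: "real K * (8 * (real K)\<^sup>2 * r0 / (3 * real T)) \<ge> 8 * r0 / (3 * real T)"
  proof -
    have "real K * (8 * (real K)\<^sup>2 * r0 / (3 * real T)) = (real K * (real K)\<^sup>2) * (8 * r0 / (3 * real T))"
      by simp
    also have "\<dots> \<ge> 1 * (8 * r0 / (3 * real T))" using K3 pos T0
      by (intro mult_right_mono) auto
    finally show ?thesis by simp
  qed
  have h3: "real M * rr \<ge> 3 * rr" using M3 pos by simp
  have h4: "real M * (2 * real K * r0) \<ge> 4 * r0"
  proof -
    have "real M * real K \<ge> 3" 
    proof -
      have "real M * real K \<ge> 3 * 1" using M3 Kr by (intro mult_mono) auto
      thus ?thesis by simp
    qed
    hence "(real M * real K) * (2 * r0) \<ge> 3 * (2*r0)" using pos by (intro mult_right_mono) auto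
    moreover have "real M * (2 * real K * r0) = (real M * real K) * (2 * r0)" by simp
    ultimately show ?thesis using pos by linarith
  qed
  have h5: "real M * (4 * (real K)\<^sup>2 * r0 / real T) \<ge> 8 * r0 / real T"
  proof -
    have "real M * (real K)\<^sup>2 \<ge> 3" 
    proof -
      have "real M * (real K)\<^sup>2 \<ge> 3 * 1" using M3 K2 by (intro mult_mono) auto
      thus ?thesis by simp
    qed
    hence "(real M * (real K)\<^sup>2) * (4 * r0 / real T) \<ge> 3 * (4 * r0 / real T)" using pos T0 by (intro mult_right_mono) auto
    moreover have "real M * (4 * (real K)\<^sup>2 * r0 / real T) = (real M * (real K)\<^sup>2) * (4 * r0 / real T)" by simp
    moreover have "4 * r0 / real T \<ge> 0" using pos T0 by simp
    moreover have "8 * r0 / real T = 2 * (4 * r0 / real T)" by simp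
    ultimately show ?thesis by linarith
  qed
  have "min rr (alpha * sqrt ((2 powr R - 1) / real T)) \<le> rr" by simp
  moreover have "alpha * real K * gamma_u M K tau R T + rs
          + real K * (rd + 8 * (real K)\<^sup>2 * r0 / (3 * real T))
          + real M * (rr + 2 * real K * r0 + 4 * (real K)\<^sup>2 * r0 / real T)
      = alpha * real K * gamma_u M K tau R T + rs + real K * rd
          + real K * (8 * (real K)\<^sup>2 * r0 / (3 * real T)) + real M * rr
          + real M * (2 * real K * r0) + real M * (4 * (real K)\<^sup>2 * r0 / real T)"
    by (simp only: distrib_left add.assoc)
  moreover have "32*r0/(3*real T) = 8 * r0 / (3 * real T) + 8 * r0 / real T" by (simp add: field_simps)
  ultimately show ?thesis using h1 h2 h3 h4 h5 h6 by linarith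
qed

lemma gamma_upper:
  assumes "1 \<le> s" "s < T" "R > 0"
  shows "gamma_u 2 1 s R T < 1 / (1 + real s) + (1 + real s) / real s * (2 powr (R / (1 - real s / real T)) - 1)"
proof -
  define c where "c = 2 powr (R / (1 - real s / real T)) - 1"
  define a where "a = (1 + real s) / (2 * real s) * c"
  have c: "c > 0" using c_ge[of 1 s T R] assms c_def by simp
  have sp: "real s > 0" using assms by simp
  have a: "a \<ge> 0" using c sp unfolding a_def by simp
  have g: "gamma_u 2 1 s R T = a + sqrt (a\<^sup>2 + c / real s)"
    unfolding gamma_u_def Let_def c_def a_def by simp
  have z: "1 / (1 + real s) + a > 0" using a sp by (simp add: add_pos_nonneg)
  have s1: "1 + real s \<noteq> 0" using sp by simp
  have key: "2 * a / (1 + real s) = c / real s" 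
  proof -
    have "real s \<noteq> 0" using sp by simp
    thus ?thesis unfolding a_def using s1 by (simp add: divide_simps)
  qed
  have "a\<^sup>2 + c / real s < (1 / (1 + real s) + a)\<^sup>2"
  proof -
    have "(1 / (1 + real s) + a)\<^sup>2 = (1 / (1 + real s))\<^sup>2 + 2 * a / (1 + real s) + a\<^sup>2"
      unfolding power2_sum by simp
    moreover have "(1 / (1 + real s))\<^sup>2 > 0" using sp by simp
    ultimately show ?thesis using key by linarith
  qed
  hence "sqrt (a\<^sup>2 + c / real s) < sqrt ((1 / (1 + real s) + a)\<^sup>2)" by (rule real_sqrt_less_mono)
  hence "sqrt (a\<^sup>2 + c / real s) < 1 / (1 + real s) + a" using z by simp
  moreover have "(1 + real s) / real s * c = 2 * a" unfolding a_def using sp by (simp add: field_simps)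
  ultimately show ?thesis using g c_def by simp
qed

lemma main:
  fixes alpha rr rd rs r0 R :: real and T :: nat
  assumes pos: "rr > 0" "rd > 0" "rs > 0" "r0 > 0" "alpha > 1" "R > 0" and T1: "T > 1"
    and hyp: "rr + 2 * r0 \<ge>
         alpha / (1 + of_int \<lfloor>sqrt (real T)\<rfloor>)
         + alpha * (1 + of_int \<lfloor>sqrt (real T)\<rfloor>) / of_int \<lfloor>sqrt (real T)\<rfloor>
           * (2 powr (R / (1 - of_int \<lfloor>sqrt (real T)\<rfloor> / real T)) - 1)"
  defines "D \<equiv> 2*rr + rd + rs + 4*r0 + 32*r0/(3*real T)"
  shows "2/3*(R/D) < zeta_star_zf R alpha rr rd rs r0 T \<and> zeta_star_zf R alpha rr rd rs r0 T < R/D"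
proof -
  define S where "S = {zeta_zf M K tau R alpha rr rd rs r0 T | M K tau :: nat.
          1 \<le> K \<and> K \<le> tau \<and> tau < T \<and> K < M}"
  define \<delta> where "\<delta> = min rr (alpha * sqrt ((2 powr R - 1) / real T))"
  have T0: "real T > 0" using T1 by simp
  have D0: "D > 0" unfolding D_def using pos T0 by (simp add: add_pos_pos)
  have "2 powr R > 1" using pos by simp
  hence "sqrt ((2 powr R - 1) / real T) > 0" using T0 by simp
  hence "alpha * sqrt ((2 powr R - 1) / real T) > 0" using pos by simp
  hence d0: "\<delta> > 0" unfolding \<delta>_def using pos by simp
  have den: "\<And>M K tau. 1 \<le> K \<Longrightarrow> K \<le> tau \<Longrightarrow> tau < T \<Longrightarrow> K < M \<Longrightarrow>
     zeta_zf M K tau R alpha rr rd rs r0 T \<le> R / (D + \<delta>)"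
  proof -
    fix M K tau :: nat
    assume f: "1 \<le> K" "K \<le> tau" "tau < T" "K < M"
    have l: "alpha * real K * gamma_u M K tau R T + rs
          + real K * (rd + 8 * (real K)\<^sup>2 * r0 / (3 * real T))
          + real M * (rr + 2 * real K * r0 + 4 * (real K)\<^sup>2 * r0 / real T) \<ge> D + \<delta>"
      using den_lower[OF pos f] unfolding D_def \<delta>_def by simp
    show "zeta_zf M K tau R alpha rr rd rs r0 T \<le> R / (D + \<delta>)"
      unfolding zeta_zf_def
      using l D0 d0 pos by (intro divide_left_mono) (auto intro: mult_pos_pos)
  qed
  have ne: "S \<noteq> {}" unfolding S_def using T1 by blast
  have ub: "\<forall>z\<in>S. z \<le> R / (D + \<delta>)" unfolding S_def using den by blast
  have sup_le: "Sup S \<le> R / (D + \<delta>)" using ne ub by (intro cSup_least) auto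
  have "R / (D + \<delta>) < R / D" using D0 d0 pos by (intro divide_strict_left_mono) auto
  hence upper: "Sup S < R / D" using sup_le by linarith
  have bdd: "bdd_above S" using ub by (auto simp: bdd_above_def)
  define fl where "fl = \<lfloor>sqrt (real T)\<rfloor>"
  define s where "s = nat fl"
  have sq1: "sqrt (real T) > 1" using T1 by simp
  hence fl1: "fl \<ge> 1" unfolding fl_def by (simp add: le_floor_iff)
  hence rs_eq: "real s = of_int fl" unfolding s_def by simp
  have "sqrt (real T) * 1 < sqrt (real T) * sqrt (real T)" using sq1 by (intro mult_strict_left_mono) auto
  hence "sqrt (real T) < real T" using T0 by (simp only: real_sqrt_mult_self mult_1_right)
  moreover have "of_int fl \<le> sqrt (real T)" unfolding fl_def by simp
  ultimately have "real s < real T" using rs_eq by linarith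
  hence sT: "s < T" by simp
  have s1: "1 \<le> s" using fl1 unfolding s_def by simp
  have gu: "gamma_u 2 1 s R T < 1 / (1 + real s) + (1 + real s) / real s * (2 powr (R / (1 - real s / real T)) - 1)"
    using gamma_upper[OF s1 sT pos(6)] .
  have "alpha * gamma_u 2 1 s R T < alpha * (1 / (1 + real s) + (1 + real s) / real s * (2 powr (R / (1 - real s / real T)) - 1))"
    using gu pos by simp
  also have "\<dots> = alpha / (1 + real s) + alpha * (1 + real s) / real s * (2 powr (R / (1 - real s / real T)) - 1)"
    by (simp add: algebra_simps)
  also have "\<dots> \<le> rr + 2 * r0" using hyp unfolding rs_eq fl_def .
  finally have ag: "alpha * gamma_u 2 1 s R T < rr + 2 * r0" .
  define Den where "Den = alpha * real 1 * gamma_u 2 1 s R T + rs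
          + real 1 * (rd + 8 * (real 1)\<^sup>2 * r0 / (3 * real T))
          + real 2 * (rr + 2 * real 1 * r0 + 4 * (real 1)\<^sup>2 * r0 / real T)"
  have Dl: "Den \<ge> D + \<delta>" unfolding Den_def D_def \<delta>_def using den_lower[OF pos, of 1 s T 2] s1 sT by simp
  define q where "q = r0 / real T"
  have q0: "q > 0" unfolding q_def using pos T0 by simp
  have e1: "Den = alpha * gamma_u 2 1 s R T + rs + rd + 8/3 * q + 2*rr + 4*r0 + 8*q"
    unfolding Den_def q_def by (simp add: algebra_simps)
  have e2: "D = 2*rr + rd + rs + 4*r0 + 32/3*q" unfolding D_def q_def by simp
  have "Den < 3/2 * D" using e1 e2 ag q0 pos by linarith
  hence "R / (3/2 * D) < R / Den" using Dl d0 D0 pos by (intro divide_strict_left_mono) auto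
  moreover have "R / (3/2 * D) = 2/3*(R/D)" by simp
  moreover have "zeta_zf 2 1 s R alpha rr rd rs r0 T = R / Den" unfolding zeta_zf_def Den_def by simp
  moreover have "zeta_zf 2 1 s R alpha rr rd rs r0 T \<in> S" unfolding S_def using s1 sT
    by (intro CollectI exI[of _ 2] exI[of _ 1] exI[of _ s]) simp
  ultimately have lower: "2/3*(R/D) < Sup S" using cSup_upper[OF _ bdd] by fastforce
  show ?thesis using upper lower unfolding zeta_star_zf_def S_def by simp
qed

theorem theorem3:
  fixes N0 B Tc Gc p_r p_d p_s C0 alpha R :: real and T :: nat
  assumes "N0 > 0" "B > 0" "Tc > 0" "Gc > 0" "p_r > 0" "p_d > 0" "p_s > 0" "C0 > 0"
    and "alpha > 1" and "real T = B * Tc" and "T > 1" and "R > 0"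
    and "Gc * p_r / (N0 * B) + 2 * (Gc * C0 / N0) \<ge>
         alpha / (1 + of_int \<lfloor>sqrt (real T)\<rfloor>)
         + alpha * (1 + of_int \<lfloor>sqrt (real T)\<rfloor>) / of_int \<lfloor>sqrt (real T)\<rfloor>
           * (2 powr (R / (1 - of_int \<lfloor>sqrt (real T)\<rfloor> / real T)) - 1)"
  shows "(let rho_r = Gc * p_r / (N0 * B); rho_d = Gc * p_d / (N0 * B);
              rho_s = Gc * p_s / (N0 * B); rho_0 = Gc * C0 / N0;
              eta = Gc / N0 * zeta_star_zf R alpha rho_r rho_d rho_s rho_0 T;
              e = R * B / (2 * p_r + p_d + p_s + 4 * C0 * B + 32 / 3 * (C0 / Tc))
          in 2 / 3 * e < eta \<and> eta < e)"
proof -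
  define rr where "rr = Gc * p_r / (N0 * B)"
  define rd where "rd = Gc * p_d / (N0 * B)"
  define rs where "rs = Gc * p_s / (N0 * B)"
  define r0 where "r0 = Gc * C0 / N0"
  define E where "E = 2 * p_r + p_d + p_s + 4 * C0 * B + 32 / 3 * (C0 / Tc)"
  define D where "D = 2*rr + rd + rs + 4*r0 + 32*r0/(3*real T)"
  define z where "z = zeta_star_zf R alpha rr rd rs r0 T"
  have pos: "rr > 0" "rd > 0" "rs > 0" "r0 > 0" unfolding rr_def rd_def rs_def r0_def
    using assms by simp_all
  have m: "2/3*(R/D) < z \<and> z < R/D"
    unfolding z_def D_def using main[OF pos assms(9) assms(12) assms(11)] assms(13)
    unfolding rr_def r0_def by simp
  have E0: "E > 0" unfolding E_def using assms by (simp add: add_pos_pos)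
  have DE: "D = Gc / (N0 * B) * E"
    unfolding D_def E_def rr_def rd_def rs_def r0_def assms(10) using assms
    by (simp add: field_simps)
  have k: "Gc / N0 > 0" using assms by simp
  have eq: "Gc / N0 * (R / D) = R * B / E" unfolding DE using assms E0 by (simp add: field_simps)
  have "2/3 * (R * B / E) < Gc / N0 * z \<and> Gc / N0 * z < R * B / E"
  proof -
    have "Gc / N0 * (2/3*(R/D)) < Gc / N0 * z" using m k by (intro mult_strict_left_mono) auto
    moreover have "Gc / N0 * z < Gc / N0 * (R/D)" using m k by (intro mult_strict_left_mono) auto
    moreover have "Gc / N0 * (2/3*(R/D)) = 2/3 * (Gc / N0 * (R / D))" by simp
    ultimately show ?thesis unfolding eq by simp
  qed
  thus ?thesis unfolding Let_def rr_def[symmetric] rd_def[symmetric] rs_def[symmetric] r0_def[symmetric]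
    z_def[symmetric] E_def[symmetric] .
qed

end
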